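(* Let $A=(a_{ij})$ be a real $m\times n$ matrix and let $X=(X_{ij})_{i\le m,j\le n}$ be a random matrix with independent mean-zero entries satisfying $\mathbb{E}|X_{ij}|\ge c$ for all $i,j$, for some $c\in(0,\infty)$. Then for all $1\le p,q\le\infty$, $$\mathbb{E}\|X_A\colon\ell_p^n\to\ell_q^m\|\ge\frac{c}{2\sqrt2}\|A\circ A\colon\ell^n_{p/2}\to\ell^m_{q/2}\|^{1/2}.$$
   Context: $X_A=(a_{ij}X_{ij})$, $A\circ A=(a_{ij}^2)$. $\ell_s^n$ is $\mathbb{R}^n$ with $\|x\|_s=(\sum|x_j|^s)^{1/s}$ ($\max$ for $s=\infty$; quasi-norm for $s<1$), $\|B\colon\ell_s^n\to\ell_t^m\|=\sup_{\|x\|_s\le1}\|Bx\|_t$. *)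

theory Defs
  imports "HOL-Probability.Probability"
begin

definition lnorm :: "ereal \<Rightarrow> nat \<Rightarrow> (nat \<Rightarrow> real) \<Rightarrow> real" where
  "lnorm s n x =
     (if s = \<infinity> then Max (insert 0 ((\<lambda>j. \<bar>x j\<bar>) ` {..<n}))
      else (\<Sum>j<n. \<bar>x j\<bar> powr real_of_ereal s) powr (1 / real_of_ereal s))"

definition opnorm :: "ereal \<Rightarrow> ereal \<Rightarrow> nat \<Rightarrow> nat \<Rightarrow> (nat \<Rightarrow> nat \<Rightarrow> real) \<Rightarrow> real" where
  "opnorm s t m n B =
     Sup {lnorm t m (\<lambda>i. \<Sum>j<n. B i j * x j) | x.
            lnorm s n x \<le> 1 \<and> (\<forall>j\<ge>n. x j = 0)}"

end

theory Submission
  imports Defs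
begin


definition sdif :: "'a set \<Rightarrow> 'a set \<Rightarrow> 'a set" where
  "sdif A B = (A - B) \<union> (B - A)"

definition chi :: "'a set \<Rightarrow> 'a set \<Rightarrow> real" where
  "chi S T = (-1) ^ card (S \<inter> T)"

lemma card_sdif:
  assumes "finite A" "finite B"
  shows "card A + card B = card (sdif A B) + 2 * card (A \<inter> B)"
proof -
  have 1: "card A = card (A - B) + card (A \<inter> B)"
    using assms by (metis Diff_Diff_Int Diff_subset Int_commute card_Diff_subset_Int card_mono add.commute
        le_add_diff_inverse Int_lower1 finite_Int card_Diff_subset)
  have 2: "card B = card (B - A) + card (A \<inter> B)"
    using assms by (metis Diff_Diff_Int Diff_subset Int_commute card_Diff_subset_Int card_mono add.commute
        le_add_diff_inverse Int_lower1 finite_Int card_Diff_subset)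
  have 3: "card (sdif A B) = card (A - B) + card (B - A)"
    unfolding sdif_def using assms by (subst card_Un_disjoint) auto
  show ?thesis using 1 2 3 by simp
qed

lemma chi_sym: "chi S T = chi T S"
  unfolding chi_def by (simp add: Int_commute)

lemma chi_sq: "chi S T * chi S T = 1"
  unfolding chi_def by (simp flip: power_add) 

lemma chi_mult_left:
  assumes "finite S" "finite R"
  shows "chi S T * chi R T = chi (sdif S R) T"
proof -
  have e: "sdif S R \<inter> T = sdif (S \<inter> T) (R \<inter> T)" unfolding sdif_def by auto
  have "card (S \<inter> T) + card (R \<inter> T) = card (sdif S R \<inter> T) + 2 * card ((S \<inter> T) \<inter> (R \<inter> T))"
    using card_sdif[of "S \<inter> T" "R \<inter> T"] assms e by simp
  then have "(-1::real) ^ (card (S \<inter> T) + card (R \<inter> T)) = (-1) ^ card (sdif S R \<inter> T)"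
    by (simp add: power_add power_mult)
  then show ?thesis unfolding chi_def by (simp add: power_add)
qed

lemma chi_mult_right:
  assumes "finite T" "finite U"
  shows "chi S T * chi S U = chi S (sdif T U)"
  using chi_mult_left[OF assms, of S] by (simp add: chi_sym)

lemma sum_chi_zero:
  assumes "finite N" "S \<subseteq> N" "S \<noteq> {}"
  shows "(\<Sum>T\<in>Pow N. chi S T) = 0"
proof -
  obtain s where s: "s \<in> S" using assms by auto
  define N' where "N' = N - {s}"
  have N: "N = insert s N'" using s assms unfolding N'_def by auto
  have sN': "s \<notin> N'" unfolding N'_def by auto
  have fin: "finite N'" using assms unfolding N'_def by auto
  have P: "Pow N = Pow N' \<union> insert s ` Pow N'" using N by (simp add: Pow_insert)
  have disj: "Pow N' \<inter> insert s ` Pow N' = {}" using sN' by auto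
  have inj: "inj_on (insert s) (Pow N')" using sN'
    by (auto simp: inj_on_def)
  have neg: "chi S (insert s T) = - chi S T" if "T \<in> Pow N'" for T
  proof -
    have "S \<inter> insert s T = insert s (S \<inter> T)" using s by auto
    moreover have "s \<notin> S \<inter> T" using that sN' by auto
    moreover have "finite (S \<inter> T)" using that fin by (meson PowD finite_Int finite_subset)
    ultimately show ?thesis unfolding chi_def by simp
  qed
  have "(\<Sum>T\<in>Pow N. chi S T) = (\<Sum>T\<in>Pow N'. chi S T) + (\<Sum>T\<in>insert s ` Pow N'. chi S T)"
    unfolding P using fin disj by (intro sum.union_disjoint) auto
  also have "(\<Sum>T\<in>insert s ` Pow N'. chi S T) = (\<Sum>T\<in>Pow N'. chi S (insert s T))"
    using inj by (simp add: sum.reindex)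
  also have "\<dots> = - (\<Sum>T\<in>Pow N'. chi S T)" using neg by (simp add: sum_negf)
  finally show ?thesis by simp
qed

lemma sdif_empty[simp]: "sdif S {} = S" "sdif S S = {}" unfolding sdif_def by auto

lemma chi_empty[simp]: "chi {} T = 1" unfolding chi_def by simp

lemma sdif_sub: "T \<subseteq> N \<Longrightarrow> U \<subseteq> N \<Longrightarrow> sdif T U \<subseteq> N" unfolding sdif_def by auto

lemma sdif_invol: "sdif (sdif T U) U = T" unfolding sdif_def by auto

lemma sdif_eq_empty: "sdif S R = {} \<longleftrightarrow> S = R" unfolding sdif_def by auto

lemma ortho:
  assumes "finite N" "S \<subseteq> N" "R \<subseteq> N"
  shows "(\<Sum>T\<in>Pow N. chi S T * chi R T) = (if S = R then 2 ^ card N else 0)"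
proof -
  have fS: "finite S" "finite R" using assms finite_subset by auto
  have "(\<Sum>T\<in>Pow N. chi S T * chi R T) = (\<Sum>T\<in>Pow N. chi (sdif S R) T)"
    using chi_mult_left[OF fS] by simp
  also have "\<dots> = (if S = R then 2 ^ card N else 0)"
  proof (cases "S = R")
    case True then show ?thesis using assms by (simp add: card_Pow)
  next
    case False
    then show ?thesis using sum_chi_zero[of N "sdif S R"] assms sdif_sub[of S N R]
      by (simp add: sdif_eq_empty)
  qed
  finally show ?thesis .
qed

lemma reindex_sdif:
  assumes "U \<subseteq> N"
  shows "(\<Sum>T\<in>Pow N. g (sdif T U)) = (\<Sum>T\<in>Pow N. (g T :: real))"
  by (rule sum.reindex_bij_witness[where i="\<lambda>T. sdif T U" and j="\<lambda>T. sdif T U"])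
     (use assms in \<open>auto simp: sdif_invol sdif_def\<close>)

definition fhat :: "'a set \<Rightarrow> ('a set \<Rightarrow> real) \<Rightarrow> 'a set \<Rightarrow> real" where
  "fhat N f S = (\<Sum>T\<in>Pow N. f T * chi S T) / 2 ^ card N"

lemma inversion:
  assumes "finite N" "T \<subseteq> N"
  shows "(\<Sum>S\<in>Pow N. fhat N f S * chi S T) = f T"
proof -
  have "(\<Sum>S\<in>Pow N. fhat N f S * chi S T)
      = (\<Sum>S\<in>Pow N. \<Sum>T'\<in>Pow N. f T' * (chi T' S * chi T S)) / 2 ^ card N"
    unfolding fhat_def by (simp add: sum_divide_distrib sum_distrib_right chi_sym mult.assoc)
  also have "\<dots> = (\<Sum>T'\<in>Pow N. f T' * (\<Sum>S\<in>Pow N. chi T' S * chi T S)) / 2 ^ card N"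
    by (subst sum.swap) (simp add: sum_distrib_left)
  also have "\<dots> = (\<Sum>T'\<in>Pow N. (if T' = T then f T * 2 ^ card N else 0)) / 2 ^ card N"
    using assms by (intro arg_cong[where f="\<lambda>x. x / _"] sum.cong) (auto simp: ortho)
  also have "\<dots> = f T" using assms by (simp add: sum.delta)
  finally show ?thesis .
qed

lemma parseval:
  assumes "finite N"
  shows "(\<Sum>T\<in>Pow N. (f T)\<^sup>2) = 2 ^ card N * (\<Sum>S\<in>Pow N. (fhat N f S)\<^sup>2)"
proof -
  have "(\<Sum>T\<in>Pow N. (f T)\<^sup>2) = (\<Sum>T\<in>Pow N. f T * (\<Sum>S\<in>Pow N. fhat N f S * chi S T))"
    using inversion[OF assms] by (simp add: power2_eq_square)
  also have "\<dots> = (\<Sum>S\<in>Pow N. fhat N f S * (\<Sum>T\<in>Pow N. f T * chi S T))"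
    by (simp add: sum_distrib_left sum_distrib_right mult_ac) (rule sum.swap)
  also have "\<dots> = (\<Sum>S\<in>Pow N. fhat N f S * (2 ^ card N * fhat N f S))"
    unfolding fhat_def by simp
  finally show ?thesis by (simp add: sum_distrib_left power2_eq_square mult_ac)
qed

lemma fhat_diff: "fhat N (\<lambda>T. f T - g T) S = fhat N f S - fhat N g S"
  unfolding fhat_def by (simp add: left_diff_distrib sum_subtractf diff_divide_distrib)

lemma fhat_shift:
  assumes "finite N" "S \<subseteq> N" "U \<subseteq> N"
  shows "fhat N (\<lambda>T. f (sdif T U)) S = chi S U * fhat N f S"
proof -
  have "(\<Sum>T\<in>Pow N. f (sdif T U) * chi S T) = (\<Sum>T\<in>Pow N. f T * chi S (sdif T U))"
    using reindex_sdif[OF assms(3), of "\<lambda>T. f T * chi S (sdif T U)"] by (simp add: sdif_invol)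
  also have "\<dots> = (\<Sum>T\<in>Pow N. chi S U * (f T * chi S T))"
  proof (intro sum.cong refl)
    fix T assume "T \<in> Pow N"
    then have "finite T" "finite U" using assms finite_subset by auto
    then show "f T * chi S (sdif T U) = chi S U * (f T * chi S T)"
      using chi_mult_right[of T U S] by (simp add: mult_ac)
  qed
  finally show ?thesis unfolding fhat_def by (simp add: sum_distrib_left)
qed

lemma chi_single: "chi S {i} = (if i \<in> S then -1 else 1)"
  unfolding chi_def by (cases "i \<in> S") (auto simp: Int_insert_right)

lemma flip_energy:
  assumes "finite N" "i \<in> N"
  shows "(\<Sum>T\<in>Pow N. (f T - f (sdif T {i}))\<^sup>2)
       = 2 ^ card N * (\<Sum>S\<in>Pow N. (if i \<in> S then 4 * (fhat N f S)\<^sup>2 else 0))"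
proof -
  have "(\<Sum>T\<in>Pow N. (f T - f (sdif T {i}))\<^sup>2)
      = 2 ^ card N * (\<Sum>S\<in>Pow N. (fhat N (\<lambda>T. f T - f (sdif T {i})) S)\<^sup>2)"
    by (rule parseval[OF assms(1)])
  also have "(\<Sum>S\<in>Pow N. (fhat N (\<lambda>T. f T - f (sdif T {i})) S)\<^sup>2)
      = (\<Sum>S\<in>Pow N. (if i \<in> S then 4 * (fhat N f S)\<^sup>2 else 0))"
  proof (intro sum.cong refl)
    fix S assume "S \<in> Pow N"
    then have "fhat N (\<lambda>T. f T - f (sdif T {i})) S = fhat N f S - chi S {i} * fhat N f S"
      using assms by (simp add: fhat_diff fhat_shift)
    then show "(fhat N (\<lambda>T. f T - f (sdif T {i})) S)\<^sup>2 = (if i \<in> S then 4 * (fhat N f S)\<^sup>2 else 0)"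
      by (simp add: chi_single power2_eq_square)
  qed
  finally show ?thesis .
qed

lemma total_energy:
  assumes "finite N"
  shows "(\<Sum>i\<in>N. \<Sum>T\<in>Pow N. (f T - f (sdif T {i}))\<^sup>2)
       = 4 * 2 ^ card N * (\<Sum>S\<in>Pow N. real (card S) * (fhat N f S)\<^sup>2)"
proof -
  have "(\<Sum>i\<in>N. \<Sum>T\<in>Pow N. (f T - f (sdif T {i}))\<^sup>2)
      = (\<Sum>i\<in>N. 2 ^ card N * (\<Sum>S\<in>Pow N. (if i \<in> S then 4 * (fhat N f S)\<^sup>2 else 0)))"
    using flip_energy[OF assms] by simp
  also have "\<dots> = 2 ^ card N * (\<Sum>S\<in>Pow N. \<Sum>i\<in>N. (if i \<in> S then 4 * (fhat N f S)\<^sup>2 else 0))"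
    by (simp add: sum_distrib_left[symmetric]) (rule sum.swap)
  also have "\<dots> = 2 ^ card N * (\<Sum>S\<in>Pow N. 4 * (real (card S) * (fhat N f S)\<^sup>2))"
  proof (intro arg_cong[where f="\<lambda>x. _ * x"] sum.cong refl)
    fix S assume S: "S \<in> Pow N"
    have "(\<Sum>i\<in>N. (if i \<in> S then 4 * (fhat N f S)\<^sup>2 else 0)) = (\<Sum>i\<in>N \<inter> S. 4 * (fhat N f S)\<^sup>2)"
      using assms by (simp only: sum.inter_restrict)
    also have "N \<inter> S = S" using S by auto
    finally show "(\<Sum>i\<in>N. (if i \<in> S then 4 * (fhat N f S)\<^sup>2 else 0)) = 4 * (real (card S) * (fhat N f S)\<^sup>2)"
      by simp
  qed
  finally show ?thesis by (simp add: sum_distrib_left mult_ac)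
qed

lemma chi_N: "S \<subseteq> N \<Longrightarrow> chi S N = (-1) ^ card S"
  unfolding chi_def by (simp add: Int_absorb2)

lemma even_fhat_odd:
  assumes "finite N" "S \<subseteq> N" "\<And>T. T \<subseteq> N \<Longrightarrow> f (sdif T N) = f T" "odd (card S)"
  shows "fhat N f S = 0"
proof -
  have "fhat N f S = fhat N (\<lambda>T. f (sdif T N)) S"
    unfolding fhat_def using assms(3) by (intro arg_cong[where f="\<lambda>x. x / _"] sum.cong) auto
  also have "\<dots> = chi S N * fhat N f S" using assms by (simp add: fhat_shift)
  also have "\<dots> = - fhat N f S" using assms by (simp add: chi_N)
  finally show ?thesis by simp
qed

lemma poincare_even:
  assumes "finite N" "\<And>T. T \<subseteq> N \<Longrightarrow> f (sdif T N) = f T"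
  shows "(\<Sum>S\<in>Pow N. real (card S) * (fhat N f S)\<^sup>2)
       \<ge> 2 * ((\<Sum>S\<in>Pow N. (fhat N f S)\<^sup>2) - (fhat N f {})\<^sup>2)"
proof -
  have "(\<Sum>S\<in>Pow N. (if S = {} then 0 else 2 * (fhat N f S)\<^sup>2))
      \<le> (\<Sum>S\<in>Pow N. real (card S) * (fhat N f S)\<^sup>2)"
  proof (intro sum_mono)
    fix S assume S: "S \<in> Pow N"
    show "(if S = {} then 0 else 2 * (fhat N f S)\<^sup>2) \<le> real (card S) * (fhat N f S)\<^sup>2"
    proof (cases "S = {}")
      case False
      have fin: "finite S" using S assms finite_subset by auto
      show ?thesis
      proof (cases "odd (card S)")
        case True then show ?thesis using even_fhat_odd[of N S f] assms S False by auto
      next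
        case ev: False
        have "card S \<noteq> 0" using False fin by auto
        with ev have "card S \<ge> 2" by presburger
        then have "2 * (fhat N f S)\<^sup>2 \<le> real (card S) * (fhat N f S)\<^sup>2"
          by (intro mult_right_mono) auto
        then show ?thesis using False by simp
      qed
    qed simp
  qed
  moreover have "(\<Sum>S\<in>Pow N. (if S = {} then 0 else 2 * (fhat N f S)\<^sup>2))
      = 2 * ((\<Sum>S\<in>Pow N. (fhat N f S)\<^sup>2) - (fhat N f {})\<^sup>2)"
  proof -
    have "(\<Sum>S\<in>Pow N. (if S = {} then 0 else 2 * (fhat N f S)\<^sup>2))
        = (\<Sum>S\<in>Pow N. 2 * (fhat N f S)\<^sup>2) - 2 * (fhat N f {})\<^sup>2"
    proof -
      have "(\<Sum>S\<in>Pow N. 2 * (fhat N f S)\<^sup>2) = 2 * (fhat N f {})\<^sup>2 + (\<Sum>S\<in>Pow N - {{}}. 2 * (fhat N f S)\<^sup>2)"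
        using assms by (subst sum.remove[of _ "{}"]) auto
      moreover have "(\<Sum>S\<in>Pow N. (if S = {} then 0 else 2 * (fhat N f S)\<^sup>2)) = 0 + (\<Sum>S\<in>Pow N - {{}}. (if S = {} then 0 else 2 * (fhat N f S)\<^sup>2))"
        using assms by (subst sum.remove[of _ "{}"]) auto
      moreover have "(\<Sum>S\<in>Pow N - {{}}. (if S = {} then 0 else 2 * (fhat N f S)\<^sup>2)) = (\<Sum>S\<in>Pow N - {{}}. 2 * (fhat N f S)\<^sup>2)"
        by (intro sum.cong) auto
      ultimately show ?thesis by simp
    qed
    then show ?thesis by (simp add: sum_distrib_left right_diff_distrib)
  qed
  ultimately show ?thesis by simp
qed

definition lin :: "'a set \<Rightarrow> ('a \<Rightarrow> real) \<Rightarrow> 'a set \<Rightarrow> real" where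
  "lin N b T = (\<Sum>j\<in>N. chi {j} T * b j)"

lemma lin_sq_sum:
  assumes "finite N"
  shows "(\<Sum>T\<in>Pow N. (lin N b T)\<^sup>2) = 2 ^ card N * (\<Sum>j\<in>N. (b j)\<^sup>2)"
proof -
  have "(\<Sum>T\<in>Pow N. (lin N b T)\<^sup>2) = (\<Sum>T\<in>Pow N. \<Sum>j\<in>N. \<Sum>l\<in>N. b j * b l * (chi {j} T * chi {l} T))"
    unfolding lin_def power2_eq_square by (simp add: sum_distrib_left sum_distrib_right mult_ac)
  also have "\<dots> = (\<Sum>j\<in>N. \<Sum>l\<in>N. b j * b l * (\<Sum>T\<in>Pow N. chi {j} T * chi {l} T))"
    by (subst sum.swap) (simp add: sum.swap[of _ N "Pow N"] sum_distrib_left)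
  also have "\<dots> = (\<Sum>j\<in>N. \<Sum>l\<in>N. (if l = j then b j * b j * 2 ^ card N else 0))"
    using assms by (intro sum.cong refl) (auto simp: ortho)
  also have "\<dots> = 2 ^ card N * (\<Sum>j\<in>N. (b j)\<^sup>2)"
    using assms by (simp add: sum.delta' sum_distrib_left power2_eq_square mult_ac)
  finally show ?thesis .
qed

lemma lin_compl:
  assumes "finite N" "T \<subseteq> N"
  shows "lin N b (sdif T N) = - lin N b T"
proof -
  have "chi {j} (sdif T N) = - chi {j} T" if "j \<in> N" for j
    using chi_mult_right[of T N "{j}"] assms that finite_subset[OF assms(2,1)] chi_single[of N j]
    by (auto simp: chi_sym[of "{j}" N])
  then show ?thesis unfolding lin_def by (simp add: sum_negf)
qed

lemma lin_flip:
  assumes "finite N" "T \<subseteq> N" "i \<in> N"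
  shows "lin N b (sdif T {i}) = lin N b T - 2 * chi {i} T * b i"
proof -
  have "chi {j} (sdif T {i}) = chi {j} T * (if j = i then -1 else 1)" if "j \<in> N" for j
    using chi_mult_right[of T "{i}" "{j}"] assms that finite_subset[OF assms(2,1)]
    by (auto simp: chi_single)
  then have "lin N b (sdif T {i}) = (\<Sum>j\<in>N. chi {j} T * b j - (if j = i then 2 * chi {j} T * b j else 0))"
    unfolding lin_def by (intro sum.cong) auto
  also have "\<dots> = lin N b T - 2 * chi {i} T * b i"
    using assms unfolding lin_def by (simp add: sum_subtractf sum.delta')
  finally show ?thesis .
qed

theorem szarek:
  assumes "finite N"
  shows "(\<Sum>T\<in>Pow N. \<bar>lin N b T\<bar>) \<ge> 2 ^ card N * sqrt (\<Sum>j\<in>N. (b j)\<^sup>2) / sqrt 2"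
proof -
  define f where "f T = \<bar>lin N b T\<bar>" for T
  define K :: real where "K = 2 ^ card N"
  define B where "B = (\<Sum>j\<in>N. (b j)\<^sup>2)"
  have Kpos: "K > 0" unfolding K_def by simp
  have ev: "f (sdif T N) = f T" if "T \<subseteq> N" for T
    unfolding f_def using lin_compl[OF assms that] by simp
  have sqf: "(\<Sum>T\<in>Pow N. (f T)\<^sup>2) = K * B"
    unfolding f_def K_def B_def using lin_sq_sum[OF assms] by simp
  have pw: "(f T - f (sdif T {i}))\<^sup>2 \<le> (f T)\<^sup>2 + (f (sdif T {i}))\<^sup>2 - 2 * (lin N b T)\<^sup>2
      + 4 * chi {i} T * b i * lin N b T" if "T \<subseteq> N" "i \<in> N" for T i
  proof -
    have "f T * f (sdif T {i}) \<ge> lin N b T * lin N b (sdif T {i})"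
      unfolding f_def by (simp add: abs_mult[symmetric])
    then show ?thesis using lin_flip[OF assms that, of b]
      by (simp add: power2_eq_square algebra_simps)
  qed
  have flipsq: "(\<Sum>T\<in>Pow N. (f (sdif T {i}))\<^sup>2) = (\<Sum>T\<in>Pow N. (f T)\<^sup>2)" if "i \<in> N" for i
    using reindex_sdif[of "{i}" N "\<lambda>T. (f T)\<^sup>2"] that by simp
  have linsq: "(\<Sum>T\<in>Pow N. (f T)\<^sup>2) = (\<Sum>T\<in>Pow N. (lin N b T)\<^sup>2)"
    unfolding f_def by simp
  have E1: "(\<Sum>T\<in>Pow N. (f T - f (sdif T {i}))\<^sup>2)
      \<le> 4 * (\<Sum>T\<in>Pow N. chi {i} T * b i * lin N b T)" if "i \<in> N" for i
  proof -
    have "(\<Sum>T\<in>Pow N. (f T - f (sdif T {i}))\<^sup>2) \<le> (\<Sum>T\<in>Pow N. (f T)\<^sup>2 + (f (sdif T {i}))\<^sup>2 - 2 * (lin N b T)\<^sup>2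
      + 4 * chi {i} T * b i * lin N b T)"
      using pw that by (intro sum_mono) auto
    also have "\<dots> = 4 * (\<Sum>T\<in>Pow N. chi {i} T * b i * lin N b T)"
      using flipsq[OF that] linsq by (simp add: sum.distrib sum_subtractf sum_distrib_left mult.assoc)
    finally show ?thesis .
  qed
  have "(\<Sum>i\<in>N. \<Sum>T\<in>Pow N. (f T - f (sdif T {i}))\<^sup>2) \<le> (\<Sum>i\<in>N. 4 * (\<Sum>T\<in>Pow N. chi {i} T * b i * lin N b T))"
    using E1 by (intro sum_mono) auto
  also have "\<dots> = 4 * (\<Sum>T\<in>Pow N. lin N b T * (\<Sum>i\<in>N. chi {i} T * b i))"
    by (simp add: sum_distrib_left sum_distrib_right mult_ac) (rule sum.swap)
  also have "\<dots> = 4 * (K * B)"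
    using lin_sq_sum[OF assms, of b] unfolding K_def B_def by (simp add: lin_def[symmetric] power2_eq_square)
  finally have up: "4 * K * (\<Sum>S\<in>Pow N. real (card S) * (fhat N f S)\<^sup>2) \<le> 4 * (K * B)"
    using total_energy[OF assms, of f] unfolding K_def by simp
  have parse: "(\<Sum>S\<in>Pow N. (fhat N f S)\<^sup>2) = B"
    using parseval[OF assms, of f] sqf Kpos unfolding K_def by simp
  have avg: "fhat N f {} = (\<Sum>T\<in>Pow N. f T) / K"
    unfolding fhat_def K_def by simp
  have lo: "(\<Sum>S\<in>Pow N. real (card S) * (fhat N f S)\<^sup>2) \<ge> 2 * (B - (fhat N f {})\<^sup>2)"
    using poincare_even[OF assms, of f] ev parse by simp
  have "(4 * K) * (\<Sum>S\<in>Pow N. real (card S) * (fhat N f S)\<^sup>2) \<le> (4 * K) * B"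
    using up by (simp add: mult_ac)
  then have "(\<Sum>S\<in>Pow N. real (card S) * (fhat N f S)\<^sup>2) \<le> B"
    using Kpos by (subst (asm) mult_le_cancel_left_pos) auto
  with lo have "2 * (B - (fhat N f {})\<^sup>2) \<le> B" by simp
  then have "B / 2 \<le> (fhat N f {})\<^sup>2" by simp
  moreover have "fhat N f {} \<ge> 0" unfolding avg f_def using Kpos by (simp add: sum_nonneg)
  ultimately have "sqrt (B / 2) \<le> fhat N f {}" by (simp add: real_le_lsqrt)
  then have "sqrt B / sqrt 2 \<le> (\<Sum>T\<in>Pow N. f T) / K" by (simp add: avg real_sqrt_divide)
  then show ?thesis using Kpos unfolding f_def K_def B_def by (simp add: field_simps)
qed


lemma lnorm_inf: "lnorm \<infinity> m x = Max (insert 0 ((\<lambda>j. \<bar>x j\<bar>) ` {..<m}))"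
  unfolding lnorm_def by simp

lemma lnorm_fin: "lnorm (ereal r) m x = (\<Sum>j<m. \<bar>x j\<bar> powr r) powr (1 / r)"
  unfolding lnorm_def by simp

lemma lnorm_cong: "(\<And>i. i < m \<Longrightarrow> x i = y i) \<Longrightarrow> lnorm s m x = lnorm s m y"
  unfolding lnorm_def by (auto intro!: sum.cong arg_cong[where f=Max] image_cong)

lemma lnorm_nonneg: "lnorm s m x \<ge> 0"
  unfolding lnorm_def by (auto intro: Max_ge)

lemma lnorm_coord:
  assumes "0 < s" "j < m"
  shows "\<bar>x j\<bar> \<le> lnorm s m x"
proof (cases s)
  case (real r)
  with assms have r: "r > 0" by simp
  have "\<bar>x j\<bar> = (\<bar>x j\<bar> powr r) powr (1 / r)" using r by (simp add: powr_powr)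
  also have "\<dots> \<le> (\<Sum>j<m. \<bar>x j\<bar> powr r) powr (1 / r)"
    using r assms by (intro powr_mono2 member_le_sum) auto
  finally show ?thesis using real by (simp add: lnorm_fin)
next
  case PInf then show ?thesis using assms by (auto simp: lnorm_inf intro: Max_ge)
next
  case MInf then show ?thesis using assms by simp
qed

lemma lnorm_mono:
  assumes "0 < s" "\<And>i. i < m \<Longrightarrow> \<bar>x i\<bar> \<le> \<bar>y i\<bar>"
  shows "lnorm s m x \<le> lnorm s m y"
proof (cases s)
  case (real r)
  with assms have r: "r > 0" by simp
  have "(\<Sum>j<m. \<bar>x j\<bar> powr r) powr (1 / r) \<le> (\<Sum>j<m. \<bar>y j\<bar> powr r) powr (1 / r)"
    using r assms by (intro powr_mono2 sum_mono sum_nonneg) auto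
  then show ?thesis using real by (simp add: lnorm_fin)
next
  case PInf
  have "Max (insert 0 ((\<lambda>j. \<bar>x j\<bar>) ` {..<m})) \<le> Max (insert 0 ((\<lambda>j. \<bar>y j\<bar>) ` {..<m}))"
  proof (rule Max.boundedI)
    show "finite (insert 0 ((\<lambda>j. \<bar>x j\<bar>) ` {..<m}))" by simp
    show "insert 0 ((\<lambda>j. \<bar>x j\<bar>) ` {..<m}) \<noteq> {}" by simp
    fix a assume "a \<in> insert 0 ((\<lambda>j. \<bar>x j\<bar>) ` {..<m})"
    then consider "a = 0" | i where "i < m" "a = \<bar>x i\<bar>" by auto
    then show "a \<le> Max (insert 0 ((\<lambda>j. \<bar>y j\<bar>) ` {..<m}))"
    proof cases
      case 1 then show ?thesis by (simp add: Max_ge)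
    next
      case 2
      then have ymax: "\<bar>y i\<bar> \<le> Max (insert 0 ((\<lambda>j. \<bar>y j\<bar>) ` {..<m}))" by (intro Max_ge) auto
      show ?thesis unfolding 2(2) using order.trans[OF assms(2)[OF 2(1)] ymax] .
    qed
  qed
  then show ?thesis using PInf by (simp add: lnorm_inf)
next
  case MInf then show ?thesis using assms by simp
qed

lemma lnorm_sqrt:
  assumes "0 < s" "s \<noteq> \<infinity>" "\<And>i. i < m \<Longrightarrow> g i \<ge> 0"
  shows "lnorm s m (\<lambda>i. sqrt (g i)) = sqrt (lnorm (s / 2) m g)"
proof -
  obtain r where s: "s = ereal r" and r: "r > 0" using assms by (cases s) auto
  have s2: "s / 2 = ereal (r / 2)" using s by simp
  have "(\<Sum>j<m. \<bar>sqrt (g j)\<bar> powr r) = (\<Sum>j<m. \<bar>g j\<bar> powr (r / 2))"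
  proof (intro sum.cong refl)
    fix j assume "j \<in> {..<m}"
    then have g: "g j \<ge> 0" using assms by auto
    have "\<bar>sqrt (g j)\<bar> = g j powr (1/2)" using g by (simp add: powr_half_sqrt)
    then show "\<bar>sqrt (g j)\<bar> powr r = \<bar>g j\<bar> powr (r / 2)" using g by (simp add: powr_powr)
  qed
  moreover have "sqrt (T powr (1 / (r / 2))) = T powr (1 / r)" if "T \<ge> 0" for T :: real
    using that r by (simp add: powr_powr flip: powr_half_sqrt)
  ultimately show ?thesis using s s2 by (simp add: lnorm_fin sum_nonneg)
qed

lemma lnorm_sqrt_inf:
  assumes "\<And>i. i < m \<Longrightarrow> g i \<ge> 0"
  shows "lnorm \<infinity> m (\<lambda>i. sqrt (g i)) = sqrt (lnorm \<infinity> m g)"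
proof -
  have "sqrt (Max (insert 0 ((\<lambda>j. \<bar>g j\<bar>) ` {..<m}))) = Max (sqrt ` insert 0 ((\<lambda>j. \<bar>g j\<bar>) ` {..<m}))"
    by (intro mono_Max_commute) (auto simp: mono_def)
  also have "sqrt ` insert 0 ((\<lambda>j. \<bar>g j\<bar>) ` {..<m}) = insert 0 ((\<lambda>j. \<bar>sqrt (g j)\<bar>) ` {..<m})"
    using assms by (auto simp: image_image)
  finally show ?thesis by (simp add: lnorm_inf)
qed

lemma holder_dual_fin:
  fixes r :: real
  assumes r: "r > 1"
  shows "\<exists>y. (\<forall>i. 0 \<le> y i) \<and> (\<forall>z. (\<Sum>i<m. y i * \<bar>z i\<bar>) \<le> lnorm (ereal r) m z)
             \<and> (\<Sum>i<m. y i * \<bar>u i\<bar>) = lnorm (ereal r) m u"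
proof -
  define N where "N = lnorm (ereal r) m u"
  define Su where "Su = (\<Sum>j<m. \<bar>u j\<bar> powr r)"
  have Su0: "Su \<ge> 0" unfolding Su_def by (simp add: sum_nonneg)
  have NSu: "N = Su powr (1 / r)" unfolding N_def Su_def by (simp add: lnorm_fin)
  show ?thesis
  proof (cases "N = 0")
    case True
    then show ?thesis by (intro exI[of _ "\<lambda>_. 0"]) (auto simp: lnorm_nonneg N_def)
  next
    case False
    then have Npos: "N > 0" using lnorm_nonneg[of "ereal r" m u] unfolding N_def by linarith
    have NrSu: "N powr r = Su" using NSu Su0 r by (simp add: powr_powr)
    have Supos: "Su > 0" using NrSu Npos by (metis powr_gt_zero less_irrefl)
    define y where "y i = (\<bar>u i\<bar> / N) powr (r - 1)" for i
    have y0: "\<forall>i. 0 \<le> y i" unfolding y_def by simp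
    have yu: "y i * \<bar>u i\<bar> = \<bar>u i\<bar> powr r / N powr (r - 1)" for i
    proof -
      have "y i * \<bar>u i\<bar> = \<bar>u i\<bar> powr (r - 1) * \<bar>u i\<bar> powr 1 / N powr (r - 1)"
        unfolding y_def using Npos by (simp add: powr_divide)
      also have "\<bar>u i\<bar> powr (r - 1) * \<bar>u i\<bar> powr 1 = \<bar>u i\<bar> powr r"
        by (subst powr_add[symmetric]) simp
      finally show ?thesis .
    qed
    have sum_yu: "(\<Sum>i<m. y i * \<bar>u i\<bar>) = N"
    proof -
      have "(\<Sum>i<m. y i * \<bar>u i\<bar>) = Su / N powr (r - 1)"
        unfolding yu Su_def by (simp add: sum_divide_distrib)
      also have "N powr (r - 1) = N powr r / N" using Npos by (simp add: powr_diff)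
      finally have "(\<Sum>i<m. y i * \<bar>u i\<bar>) = Su / (N powr r / N)" .
      moreover have "Su > 0" using NrSu Npos by (metis powr_gt_zero less_irrefl)
      ultimately show ?thesis using NrSu Npos by simp
    qed
    define r' where "r' = r / (r - 1)"
    have r': "r' > 1" "1 / r' + 1 / r = 1" unfolding r'_def using r by (auto simp: field_simps)
    have ypow: "y i powr r' = \<bar>u i\<bar> powr r / N powr r" for i
      unfolding y_def r'_def using r Npos by (simp add: powr_powr powr_divide)
    have sum_ypow: "(\<Sum>i<m. y i powr r') = 1"
      unfolding ypow using NrSu Npos Supos Su_def by (simp add: sum_divide_distrib[symmetric])
    have hold: "(\<Sum>i<m. y i * \<bar>z i\<bar>) \<le> lnorm (ereal r) m z" for z
    proof -
      define Z where "Z = lnorm (ereal r) m z"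
      define Sz where "Sz = (\<Sum>j<m. \<bar>z j\<bar> powr r)"
      have Sz0: "Sz \<ge> 0" unfolding Sz_def by (simp add: sum_nonneg)
      have ZrSz: "Z powr r = Sz" unfolding Z_def Sz_def using Sz0 r
        by (simp add: lnorm_fin powr_powr sum_nonneg)
      show ?thesis
      proof (cases "Z = 0")
        case True
        then have "z i = 0" if "i < m" for i
          using lnorm_coord[of "ereal r" i m z] that r unfolding Z_def by simp
        then show ?thesis using True unfolding Z_def by simp
      next
        case False
        then have Zpos: "Z > 0" using lnorm_nonneg[of "ereal r" m z] unfolding Z_def by linarith
        have trm: "y i * \<bar>z i\<bar> \<le> Z * (y i powr r' / r' + (\<bar>z i\<bar> / Z) powr r / r)" for i
        proof -
          have "y i * (\<bar>z i\<bar> / Z) \<le> y i powr r' / r' + (\<bar>z i\<bar> / Z) powr r / r"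
            using Youngs_inequality[of r' r "y i" "\<bar>z i\<bar> / Z"] r r' y0 Zpos by (simp add: add.commute)
          from mult_left_mono[OF this, of Z] Zpos show ?thesis by (simp add: field_simps)
        qed
        have "(\<Sum>i<m. y i * \<bar>z i\<bar>) \<le> (\<Sum>i<m. Z * (y i powr r' / r' + (\<bar>z i\<bar> / Z) powr r / r))"
          by (intro sum_mono trm)
        also have "\<dots> = Z * ((\<Sum>i<m. y i powr r') / r' + (\<Sum>i<m. \<bar>z i\<bar> powr r) / Z powr r / r)"
          using Zpos by (simp add: sum_distrib_left[symmetric] sum.distrib sum_divide_distrib powr_divide)
        also have "\<dots> = Z * (1 / r' + 1 / r)"
        proof -
          have Szpos: "Sz > 0" using ZrSz Zpos by (metis powr_gt_zero less_irrefl)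
          then show ?thesis using sum_ypow ZrSz Sz_def by simp
        qed
        also have "\<dots> = Z" using r' by simp
        finally show ?thesis unfolding Z_def .
      qed
    qed
    show ?thesis using y0 hold sum_yu unfolding N_def by blast
  qed
qed

lemma lnorm_dual:
  assumes "1 \<le> s"
  shows "\<exists>y. (\<forall>i. 0 \<le> y i) \<and> (\<forall>z. (\<Sum>i<m. y i * \<bar>z i\<bar>) \<le> lnorm s m z)
             \<and> (\<Sum>i<m. y i * \<bar>u i\<bar>) = lnorm s m u"
proof (cases s)
  case (real r)
  show ?thesis
  proof (cases "r = 1")
    case True
    have l1: "lnorm s m z = (\<Sum>i<m. 1 * \<bar>z i\<bar>)" for z
      using real True by (simp add: lnorm_fin)
    show ?thesis by (intro exI[of _ "\<lambda>_. 1"]) (simp add: l1)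
  next
    case False
    then have "r > 1" using assms real by simp
    then show ?thesis using holder_dual_fin real by blast
  qed
next
  case PInf
  show ?thesis
  proof (cases "m = 0")
    case True
    then show ?thesis by (intro exI[of _ "\<lambda>_. 0"]) (auto simp: lnorm_nonneg PInf lnorm_inf)
  next
    case False
    have fin: "finite ((\<lambda>j. \<bar>u j\<bar>) ` {..<m})" "(\<lambda>j. \<bar>u j\<bar>) ` {..<m} \<noteq> {}" using False by auto
    obtain k where k: "k < m" "\<bar>u k\<bar> = Max ((\<lambda>j. \<bar>u j\<bar>) ` {..<m})"
      using Max_in[OF fin] by auto
    have "Max (insert 0 ((\<lambda>j. \<bar>u j\<bar>) ` {..<m})) = max 0 (Max ((\<lambda>j. \<bar>u j\<bar>) ` {..<m}))"
      using fin by (simp add: Max_insert)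
    then have lu: "lnorm s m u = \<bar>u k\<bar>" using k PInf by (simp add: lnorm_inf)
    define y where "y i = (if i = k then 1 else 0::real)" for i
    have s1: "(\<Sum>i<m. y i * \<bar>z i\<bar>) = \<bar>z k\<bar>" for z
    proof -
      have "(\<Sum>i<m. y i * \<bar>z i\<bar>) = (\<Sum>i<m. if i = k then \<bar>z k\<bar> else 0)"
        by (rule sum.cong) (auto simp: y_def)
      then show ?thesis using k by simp
    qed
    show ?thesis
      by (intro exI[of _ y]) (use k PInf lu s1 lnorm_coord[of s k m] in \<open>auto simp: y_def\<close>)
  qed
next
  case MInf then show ?thesis using assms by simp
qed

lemma lnorm_le_l1:
  assumes "1 \<le> s"
  shows "lnorm s m z \<le> (\<Sum>i<m. \<bar>z i\<bar>)"
proof -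
  obtain y where y: "\<forall>i. 0 \<le> y i" "\<forall>z. (\<Sum>i<m. y i * \<bar>z i\<bar>) \<le> lnorm s m z"
      "(\<Sum>i<m. y i * \<bar>z i\<bar>) = lnorm s m z"
    using lnorm_dual[OF assms] by blast
  have e1: "lnorm s m (\<lambda>j. if j = i then 1 else 0) \<le> 1" if "i < m" for i
  proof (cases s)
    case (real r)
    then have "r \<ge> 1" using assms by simp
    have "(\<Sum>j<m. \<bar>if j = i then 1 else (0::real)\<bar> powr r) = (\<Sum>j<m. if j = i then 1 else 0)"
      by (rule sum.cong) auto
    also have "\<dots> = 1" using that by simp
    finally show ?thesis using real by (simp add: lnorm_fin)
  next
    case PInf
    have "(\<lambda>j. \<bar>if j = i then 1 else 0\<bar>) ` {..<m} \<subseteq> {0, 1::real}" by auto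
    then have "\<forall>a \<in> insert 0 ((\<lambda>j. \<bar>if j = i then 1 else 0\<bar>) ` {..<m}). a \<le> (1::real)" by auto
    then show ?thesis using PInf by (simp add: lnorm_inf del: Max_insert)
  next
    case MInf then show ?thesis using assms by simp
  qed
  have "y i \<le> 1" if "i < m" for i
  proof -
    have "(\<Sum>k<m. y k * \<bar>if k = i then 1 else 0\<bar>) = (\<Sum>k<m. if k = i then y i else 0)"
      by (rule sum.cong) auto
    then have "(\<Sum>k<m. y k * \<bar>if k = i then 1 else 0\<bar>) = y i" using that by simp
    then show ?thesis using y(2) e1[OF that] by (metis order.trans)
  qed
  then have "(\<Sum>i<m. y i * \<bar>z i\<bar>) \<le> (\<Sum>i<m. \<bar>z i\<bar>)"
    using y(1) by (intro sum_mono) (simp add: mult_left_le_one_le)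
  then show ?thesis using y(3) by simp
qed

lemma lnorm_triangle:
  assumes "1 \<le> s"
  shows "lnorm s m (\<lambda>i. u i + w i) \<le> lnorm s m u + lnorm s m w"
proof -
  obtain y where y: "\<forall>i. 0 \<le> y i" "\<forall>z. (\<Sum>i<m. y i * \<bar>z i\<bar>) \<le> lnorm s m z"
      "(\<Sum>i<m. y i * \<bar>u i + w i\<bar>) = lnorm s m (\<lambda>i. u i + w i)"
    using lnorm_dual[OF assms, of m "\<lambda>i. u i + w i"] by blast
  have "(\<Sum>i<m. y i * \<bar>u i + w i\<bar>) \<le> (\<Sum>i<m. y i * \<bar>u i\<bar> + y i * \<bar>w i\<bar>)"
    using y(1) by (intro sum_mono) (simp add: abs_triangle_ineq mult_left_mono flip: distrib_left)
  also have "\<dots> \<le> lnorm s m u + lnorm s m w"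
    using y(2) by (simp add: sum.distrib add_mono)
  finally show ?thesis using y(3) by simp
qed


definition oset :: "ereal \<Rightarrow> ereal \<Rightarrow> nat \<Rightarrow> nat \<Rightarrow> (nat \<Rightarrow> nat \<Rightarrow> real) \<Rightarrow> real set" where
  "oset s t m n B = {lnorm t m (\<lambda>i. \<Sum>j<n. B i j * x j) | x. lnorm s n x \<le> 1 \<and> (\<forall>j\<ge>n. x j = 0)}"

lemma opnorm_oset: "opnorm s t m n B = Sup (oset s t m n B)"
  unfolding opnorm_def oset_def ..

lemma oset_ne: "oset s t m n B \<noteq> {}"
proof -
  have "lnorm s n (\<lambda>_. 0) \<le> 1" unfolding lnorm_def by auto
  then show ?thesis unfolding oset_def by blast
qed

lemma oset_bound:
  assumes "1 \<le> p" "1 \<le> q" "v \<in> oset p q m n B"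
  shows "v \<le> (\<Sum>i<m. \<Sum>j<n. \<bar>B i j\<bar>)"
proof -
  obtain x where x: "v = lnorm q m (\<lambda>i. \<Sum>j<n. B i j * x j)" "lnorm p n x \<le> 1"
    using assms unfolding oset_def by auto
  have p0: "0 < p" using assms(1) by (cases p) auto
  have xj: "\<bar>x j\<bar> \<le> 1" if "j < n" for j using lnorm_coord[OF p0 that, of x] x(2) by simp
  have "v \<le> (\<Sum>i<m. \<bar>\<Sum>j<n. B i j * x j\<bar>)" using x(1) lnorm_le_l1[OF assms(2)] by simp
  also have "\<dots> \<le> (\<Sum>i<m. \<Sum>j<n. \<bar>B i j\<bar>)"
  proof (intro sum_mono)
    fix i
    have "\<bar>\<Sum>j<n. B i j * x j\<bar> \<le> (\<Sum>j<n. \<bar>B i j * x j\<bar>)" by (rule sum_abs)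
    also have "\<dots> \<le> (\<Sum>j<n. \<bar>B i j\<bar>)"
      using xj by (intro sum_mono) (simp add: abs_mult mult_left_le)
    finally show "\<bar>\<Sum>j<n. B i j * x j\<bar> \<le> (\<Sum>j<n. \<bar>B i j\<bar>)" .
  qed
  finally show ?thesis .
qed

lemma oset_bdd: "1 \<le> p \<Longrightarrow> 1 \<le> q \<Longrightarrow> bdd_above (oset p q m n B)"
  using oset_bound by (meson bdd_above.I)

lemma opnorm_ge:
  assumes "1 \<le> p" "1 \<le> q" "lnorm p n x \<le> 1" "\<forall>j\<ge>n. x j = 0"
  shows "lnorm q m (\<lambda>i. \<Sum>j<n. B i j * x j) \<le> opnorm p q m n B"
  unfolding opnorm_oset
  by (rule cSup_upper[OF _ oset_bdd[OF assms(1,2)]]) (use assms in \<open>auto simp: oset_def\<close>)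

lemma opnorm_le_l1:
  assumes "1 \<le> p" "1 \<le> q"
  shows "opnorm p q m n B \<le> (\<Sum>i<m. \<Sum>j<n. \<bar>B i j\<bar>)"
  unfolding opnorm_oset using oset_ne oset_bound[OF assms] by (intro cSup_least) auto

lemma opnorm_nonneg:
  assumes "1 \<le> p" "1 \<le> q"
  shows "0 \<le> opnorm p q m n B"
proof -
  have "lnorm p n (\<lambda>_. 0) \<le> 1" unfolding lnorm_def by auto
  from opnorm_ge[OF assms this] show ?thesis using lnorm_nonneg by (meson order.trans)
qed

lemma opnorm_cong:
  assumes "\<And>i j. i < m \<Longrightarrow> j < n \<Longrightarrow> B i j = B' i j"
  shows "opnorm s t m n B = opnorm s t m n B'"
proof -
  have "lnorm t m (\<lambda>i. \<Sum>j<n. B i j * x j) = lnorm t m (\<lambda>i. \<Sum>j<n. B' i j * x j)" for x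
    using assms by (intro lnorm_cong sum.cong) auto
  then show ?thesis unfolding opnorm_def by simp
qed

lemma opnorm_lip:
  assumes "1 \<le> p" "1 \<le> q"
  shows "opnorm p q m n B \<le> opnorm p q m n B' + (\<Sum>i<m. \<Sum>j<n. \<bar>B i j - B' i j\<bar>)"
  unfolding opnorm_oset[of p q m n B]
proof (intro cSup_least oset_ne)
  fix v assume "v \<in> oset p q m n B"
  then obtain x where x: "v = lnorm q m (\<lambda>i. \<Sum>j<n. B i j * x j)" "lnorm p n x \<le> 1" "\<forall>j\<ge>n. x j = 0"
    unfolding oset_def by auto
  have eq: "(\<lambda>i. \<Sum>j<n. B i j * x j) = (\<lambda>i. (\<Sum>j<n. B' i j * x j) + (\<Sum>j<n. (B i j - B' i j) * x j))"
    by (simp add: sum.distrib[symmetric] algebra_simps)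
  have "v \<le> lnorm q m (\<lambda>i. \<Sum>j<n. B' i j * x j) + lnorm q m (\<lambda>i. \<Sum>j<n. (B i j - B' i j) * x j)"
    unfolding x(1) eq by (rule lnorm_triangle[OF assms(2)])
  also have "\<dots> \<le> opnorm p q m n B' + opnorm p q m n (\<lambda>i j. B i j - B' i j)"
    using opnorm_ge[OF assms x(2,3)] by (intro add_mono) auto
  also have "\<dots> \<le> opnorm p q m n B' + (\<Sum>i<m. \<Sum>j<n. \<bar>B i j - B' i j\<bar>)"
    using opnorm_le_l1[OF assms, of m n "\<lambda>i j. B i j - B' i j"] by simp
  finally show "v \<le> opnorm p q m n B' + (\<Sum>i<m. \<Sum>j<n. \<bar>B i j - B' i j\<bar>)" .
qed

lemma opnorm_cont:
  assumes "1 \<le> p" "1 \<le> q"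
  shows "continuous_on UNIV (opnorm p q m n)"
proof -
  have "isCont (opnorm p q m n) B0" for B0
  proof -
    define h where "h B = (\<Sum>i<m. \<Sum>j<n. \<bar>B i j - B0 i j\<bar>)" for B :: "nat \<Rightarrow> nat \<Rightarrow> real"
    have cij: "continuous_on UNIV (\<lambda>B::nat\<Rightarrow>nat\<Rightarrow>real. B i j)" for i j
      by (rule continuous_on_product_then_coordinatewise[OF continuous_on_product_coordinates])
    have "continuous_on UNIV h" unfolding h_def
      by (intro continuous_on_sum continuous_on_rabs continuous_on_diff cij continuous_on_const)
    then have "(h \<longlongrightarrow> h B0) (at B0)"
      by (simp add: continuous_on_def)
    then have h0: "(h \<longlongrightarrow> 0) (at B0)" unfolding h_def by simp
    have "((\<lambda>B. opnorm p q m n B - opnorm p q m n B0) \<longlongrightarrow> 0) (at B0)"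
    proof (rule Lim_null_comparison[OF _ h0])
      show "\<forall>\<^sub>F B in at B0. norm (opnorm p q m n B - opnorm p q m n B0) \<le> h B"
      proof (intro always_eventually allI)
        fix B
        have "opnorm p q m n B \<le> opnorm p q m n B0 + h B" unfolding h_def by (rule opnorm_lip[OF assms])
        moreover have "opnorm p q m n B0 \<le> opnorm p q m n B + h B"
          using opnorm_lip[OF assms, of m n B0 B] unfolding h_def by (simp add: abs_minus_commute)
        ultimately show "norm (opnorm p q m n B - opnorm p q m n B0) \<le> h B" by simp
      qed
    qed
    then show ?thesis unfolding isCont_def by (simp add: LIM_zero_iff)
  qed
  then show ?thesis by (simp add: continuous_at_imp_continuous_on)
qed

lemma opnorm_measurable:
  assumes "1 \<le> p" "1 \<le> q" "\<And>i j. i < m \<Longrightarrow> j < n \<Longrightarrow> F i j \<in> borel_measurable M"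
  shows "(\<lambda>\<omega>. opnorm p q m n (\<lambda>i j. F i j \<omega>)) \<in> borel_measurable M"
proof -
  define F' where "F' \<omega> = (\<lambda>i j. if i < m \<and> j < n then F i j \<omega> else 0)" for \<omega>
  have "F' \<in> borel_measurable M"
    unfolding F'_def
  proof (rule measurable_coordinatewise_then_product, rule measurable_coordinatewise_then_product)
    fix i j
    show "(\<lambda>\<omega>. if i < m \<and> j < n then F i j \<omega> else 0) \<in> borel_measurable M"
    proof (cases "i < m \<and> j < n")
      case True
      then have "(\<lambda>\<omega>. if i < m \<and> j < n then F i j \<omega> else 0) = F i j" by auto
      then show ?thesis using assms(3)[of i j] True by (simp only:)
    next
      case False
      then have "(\<lambda>\<omega>. if i < m \<and> j < n then F i j \<omega> else 0) = (\<lambda>_. 0)" by auto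
      then show ?thesis by (simp only:) (rule borel_measurable_const)
    qed
  qed
  then have "(\<lambda>\<omega>. opnorm p q m n (F' \<omega>)) \<in> borel_measurable M"
    by (rule borel_measurable_continuous_on[OF opnorm_cont[OF assms(1,2)]])
  moreover have "(\<lambda>\<omega>. opnorm p q m n (F' \<omega>)) = (\<lambda>\<omega>. opnorm p q m n (\<lambda>i j. F i j \<omega>))"
    unfolding F'_def by (rule ext, rule opnorm_cong) auto
  ultimately show ?thesis by (simp only:)
qed


lemma chi_singleton: "chi {j} T = (if j \<in> T then -1 else 1)"
  unfolding chi_def by (cases "j \<in> T") auto

context prob_space
begin

lemma indep_blocks:
  fixes Y :: "'i \<Rightarrow> 'a \<Rightarrow> real"
  assumes ind: "indep_vars (\<lambda>_. borel) Y I" and AB: "A \<inter> B = {}" "A \<subseteq> I" "B \<subseteq> I"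
  shows "indep_var borel (\<lambda>\<omega>. \<Sum>i\<in>A. Y i \<omega>) borel (\<lambda>\<omega>. \<Sum>i\<in>B. Y i \<omega>)"
proof -
  have "indep_var
    borel ((\<lambda>f. \<Sum>i\<in>A. f i) \<circ> (\<lambda>\<omega>. restrict (\<lambda>i. Y i \<omega>) A))
    borel ((\<lambda>f. \<Sum>i\<in>B. f i) \<circ> (\<lambda>\<omega>. restrict (\<lambda>i. Y i \<omega>) B))"
    using AB by (intro indep_var_compose[OF indep_var_restrict[OF ind]]) auto
  also have "((\<lambda>f. \<Sum>i\<in>A. f i) \<circ> (\<lambda>\<omega>. restrict (\<lambda>i. Y i \<omega>) A)) = (\<lambda>\<omega>. \<Sum>i\<in>A. Y i \<omega>)"
    by (auto cong: rev_conj_cong)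
  also have "((\<lambda>f. \<Sum>i\<in>B. f i) \<circ> (\<lambda>\<omega>. restrict (\<lambda>i. Y i \<omega>) B)) = (\<lambda>\<omega>. \<Sum>i\<in>B. Y i \<omega>)"
    by (auto cong: rev_conj_cong)
  finally show ?thesis .
qed

lemma abs_le_abs_add:
  fixes U V :: "'a \<Rightarrow> real"
  assumes ind: "indep_var borel U borel V" and iU: "integrable M U" and iV: "integrable M V"
    and EV: "expectation V = 0"
  shows "expectation (\<lambda>\<omega>. \<bar>U \<omega>\<bar>) \<le> expectation (\<lambda>\<omega>. \<bar>U \<omega> + V \<omega>\<bar>)"
proof -
  have [measurable]: "random_variable borel U" using ind by (elim indep_var_rv1)
  have [measurable]: "random_variable borel V" using ind by (elim indep_var_rv2)
  have ind2: "indep_var borel (\<lambda>\<omega>. sgn (U \<omega>)) borel V"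
  proof -
    have "indep_var borel (sgn \<circ> U) borel ((\<lambda>x. x) \<circ> V)"
      by (rule indep_var_compose[OF ind]) measurable
    then show ?thesis by (simp add: comp_def)
  qed
  have isg: "integrable M (\<lambda>\<omega>. sgn (U \<omega>))"
    by (intro integrable_const_bound[where B=1]) (auto simp: sgn_real_def)
  have prod0: "expectation (\<lambda>\<omega>. sgn (U \<omega>) * V \<omega>) = 0"
    using indep_var_lebesgue_integral[OF ind2 isg iV] EV by simp
  have iprod: "integrable M (\<lambda>\<omega>. sgn (U \<omega>) * V \<omega>)"
    using indep_var_integrable[OF ind2 isg iV] .
  have absU: "\<bar>U \<omega>\<bar> = sgn (U \<omega>) * (U \<omega> + V \<omega>) - sgn (U \<omega>) * V \<omega>" for \<omega>
    by (simp add: algebra_simps abs_real_def sgn_real_def)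
  have iabsU: "integrable M (\<lambda>\<omega>. \<bar>U \<omega>\<bar>)" using iU by auto
  have i1: "integrable M (\<lambda>\<omega>. sgn (U \<omega>) * (U \<omega> + V \<omega>))"
  proof -
    have "(\<lambda>\<omega>. sgn (U \<omega>) * (U \<omega> + V \<omega>)) = (\<lambda>\<omega>. \<bar>U \<omega>\<bar> + sgn (U \<omega>) * V \<omega>)"
      by (auto simp: algebra_simps abs_real_def sgn_real_def)
    then show ?thesis using iabsU iprod by simp
  qed
  have "expectation (\<lambda>\<omega>. \<bar>U \<omega>\<bar>) = expectation (\<lambda>\<omega>. sgn (U \<omega>) * (U \<omega> + V \<omega>)) - expectation (\<lambda>\<omega>. sgn (U \<omega>) * V \<omega>)"
    unfolding absU using i1 iprod by (rule Bochner_Integration.integral_diff)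
  also have "\<dots> = expectation (\<lambda>\<omega>. sgn (U \<omega>) * (U \<omega> + V \<omega>))" using prod0 by simp
  also have "\<dots> \<le> expectation (\<lambda>\<omega>. \<bar>U \<omega> + V \<omega>\<bar>)"
  proof (rule integral_mono[OF i1])
    show "integrable M (\<lambda>\<omega>. \<bar>U \<omega> + V \<omega>\<bar>)" using iU iV by auto
    fix \<omega> show "sgn (U \<omega>) * (U \<omega> + V \<omega>) \<le> \<bar>U \<omega> + V \<omega>\<bar>"
      by (simp add: sgn_real_def abs_real_def)
  qed
  finally show ?thesis .
qed

lemma sub_sum_le:
  fixes Y :: "'i \<Rightarrow> 'a \<Rightarrow> real"
  assumes ind: "indep_vars (\<lambda>_. borel) Y I" and fin: "finite I" and B: "B \<subseteq> I"
    and int: "\<And>i. i \<in> I \<Longrightarrow> integrable M (Y i)" and mean: "\<And>i. i \<in> I \<Longrightarrow> expectation (Y i) = 0"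
  shows "expectation (\<lambda>\<omega>. \<bar>\<Sum>i\<in>B. Y i \<omega>\<bar>) \<le> expectation (\<lambda>\<omega>. \<bar>\<Sum>i\<in>I. Y i \<omega>\<bar>)"
proof -
  have split: "(\<Sum>i\<in>I. Y i \<omega>) = (\<Sum>i\<in>B. Y i \<omega>) + (\<Sum>i\<in>I - B. Y i \<omega>)" for \<omega>
    using fin B by (metis add.commute sum.subset_diff)
  have "expectation (\<lambda>\<omega>. \<bar>\<Sum>i\<in>B. Y i \<omega>\<bar>) \<le> expectation (\<lambda>\<omega>. \<bar>(\<Sum>i\<in>B. Y i \<omega>) + (\<Sum>i\<in>I - B. Y i \<omega>)\<bar>)"
  proof (rule abs_le_abs_add)
    show "indep_var borel (\<lambda>\<omega>. \<Sum>i\<in>B. Y i \<omega>) borel (\<lambda>\<omega>. \<Sum>i\<in>I - B. Y i \<omega>)"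
      using B by (intro indep_blocks[OF ind]) auto
    show "integrable M (\<lambda>\<omega>. \<Sum>i\<in>B. Y i \<omega>)" using B int by (intro Bochner_Integration.integrable_sum) auto
    show "integrable M (\<lambda>\<omega>. \<Sum>i\<in>I - B. Y i \<omega>)" using int by (intro Bochner_Integration.integrable_sum) auto
    show "expectation (\<lambda>\<omega>. \<Sum>i\<in>I - B. Y i \<omega>) = 0"
      using int mean by (subst Bochner_Integration.integral_sum) auto
  qed
  then show ?thesis unfolding split .
qed

lemma signed_sum_le:
  fixes Y :: "'i \<Rightarrow> 'a \<Rightarrow> real"
  assumes ind: "indep_vars (\<lambda>_. borel) Y I" and fin: "finite I" and T: "T \<subseteq> I"
    and int: "\<And>i. i \<in> I \<Longrightarrow> integrable M (Y i)" and mean: "\<And>i. i \<in> I \<Longrightarrow> expectation (Y i) = 0"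
  shows "expectation (\<lambda>\<omega>. \<bar>lin I (\<lambda>j. Y j \<omega>) T\<bar>) \<le> 2 * expectation (\<lambda>\<omega>. \<bar>\<Sum>i\<in>I. Y i \<omega>\<bar>)"
proof -
  have eq: "lin I (\<lambda>j. Y j \<omega>) T = (\<Sum>i\<in>I - T. Y i \<omega>) - (\<Sum>i\<in>T. Y i \<omega>)" for \<omega>
  proof -
    have "lin I (\<lambda>j. Y j \<omega>) T = (\<Sum>i\<in>I. (if i \<in> T then - Y i \<omega> else Y i \<omega>))"
      unfolding lin_def by (intro sum.cong) (auto simp: chi_singleton)
    also have "\<dots> = (\<Sum>i\<in>I - T. Y i \<omega>) + (\<Sum>i\<in>T. - Y i \<omega>)"
      using fin T by (simp add: sum.If_cases Int_absorb1 Diff_eq Int_commute)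
    finally show ?thesis by (simp add: sum_negf)
  qed
  have iA: "integrable M (\<lambda>\<omega>. \<Sum>i\<in>I - T. Y i \<omega>)" using int by (intro Bochner_Integration.integrable_sum) auto
  have iB: "integrable M (\<lambda>\<omega>. \<Sum>i\<in>T. Y i \<omega>)" using int T by (intro Bochner_Integration.integrable_sum) auto
  have "expectation (\<lambda>\<omega>. \<bar>lin I (\<lambda>j. Y j \<omega>) T\<bar>)
      \<le> expectation (\<lambda>\<omega>. \<bar>\<Sum>i\<in>I - T. Y i \<omega>\<bar> + \<bar>\<Sum>i\<in>T. Y i \<omega>\<bar>)"
    unfolding eq using iA iB by (intro integral_mono) auto
  also have "\<dots> = expectation (\<lambda>\<omega>. \<bar>\<Sum>i\<in>I - T. Y i \<omega>\<bar>) + expectation (\<lambda>\<omega>. \<bar>\<Sum>i\<in>T. Y i \<omega>\<bar>)"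
    using iA iB by (intro Bochner_Integration.integral_add) auto
  also have "\<dots> \<le> expectation (\<lambda>\<omega>. \<bar>\<Sum>i\<in>I. Y i \<omega>\<bar>) + expectation (\<lambda>\<omega>. \<bar>\<Sum>i\<in>I. Y i \<omega>\<bar>)"
    by (intro add_mono sub_sum_le[OF ind fin _ int mean]) (use T in auto)
  finally show ?thesis by simp
qed

lemma khintchine_prob:
  fixes Y :: "'i \<Rightarrow> 'a \<Rightarrow> real"
  assumes ind: "indep_vars (\<lambda>_. borel) Y I" and fin: "finite I"
    and int: "\<And>i. i \<in> I \<Longrightarrow> integrable M (Y i)" and mean: "\<And>i. i \<in> I \<Longrightarrow> expectation (Y i) = 0"
  shows "expectation (\<lambda>\<omega>. sqrt (\<Sum>j\<in>I. (Y j \<omega>)\<^sup>2)) \<le> 2 * sqrt 2 * expectation (\<lambda>\<omega>. \<bar>\<Sum>i\<in>I. Y i \<omega>\<bar>)"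
proof -
  have [measurable]: "Y i \<in> borel_measurable M" if "i \<in> I" for i
    using ind that unfolding indep_vars_def by auto
  define K :: real where "K = 2 ^ card I"
  have Kpos: "K > 0" unfolding K_def by simp
  have ilin: "integrable M (\<lambda>\<omega>. \<bar>lin I (\<lambda>j. Y j \<omega>) T\<bar>)" for T
    unfolding lin_def using int by (intro integrable_abs Bochner_Integration.integrable_sum integrable_mult_right) auto
  have isq: "integrable M (\<lambda>\<omega>. sqrt (\<Sum>j\<in>I. (Y j \<omega>)\<^sup>2))"
  proof (rule Bochner_Integration.integrable_bound)
    show "integrable M (\<lambda>\<omega>. \<Sum>j\<in>I. \<bar>Y j \<omega>\<bar>)" using int by (intro Bochner_Integration.integrable_sum integrable_abs) auto
    show "(\<lambda>\<omega>. sqrt (\<Sum>j\<in>I. (Y j \<omega>)\<^sup>2)) \<in> borel_measurable M" by measurable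
    show "AE \<omega> in M. norm (sqrt (\<Sum>j\<in>I. (Y j \<omega>)\<^sup>2)) \<le> norm (\<Sum>j\<in>I. \<bar>Y j \<omega>\<bar>)"
    proof (intro AE_I2)
      fix \<omega>
      have "L2_set (\<lambda>j. \<bar>Y j \<omega>\<bar>) I \<le> (\<Sum>j\<in>I. \<bar>Y j \<omega>\<bar>)"
        by (rule L2_set_le_sum) auto
      then have "sqrt (\<Sum>j\<in>I. (Y j \<omega>)\<^sup>2) \<le> (\<Sum>j\<in>I. \<bar>Y j \<omega>\<bar>)"
        unfolding L2_set_def by simp
      then show "norm (sqrt (\<Sum>j\<in>I. (Y j \<omega>)\<^sup>2)) \<le> norm (\<Sum>j\<in>I. \<bar>Y j \<omega>\<bar>)"
        by (simp add: sum_nonneg)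
    qed
  qed
  have pw: "K * sqrt (\<Sum>j\<in>I. (Y j \<omega>)\<^sup>2) / sqrt 2 \<le> (\<Sum>T\<in>Pow I. \<bar>lin I (\<lambda>j. Y j \<omega>) T\<bar>)" for \<omega>
    using szarek[OF fin, of "\<lambda>j. Y j \<omega>"] unfolding K_def by simp
  have "K / sqrt 2 * expectation (\<lambda>\<omega>. sqrt (\<Sum>j\<in>I. (Y j \<omega>)\<^sup>2))
      = expectation (\<lambda>\<omega>. K * sqrt (\<Sum>j\<in>I. (Y j \<omega>)\<^sup>2) / sqrt 2)"
    by simp
  also have "\<dots> \<le> expectation (\<lambda>\<omega>. \<Sum>T\<in>Pow I. \<bar>lin I (\<lambda>j. Y j \<omega>) T\<bar>)"
    using pw isq ilin by (intro integral_mono Bochner_Integration.integrable_sum) auto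
  also have "\<dots> = (\<Sum>T\<in>Pow I. expectation (\<lambda>\<omega>. \<bar>lin I (\<lambda>j. Y j \<omega>) T\<bar>))"
    using ilin by (intro Bochner_Integration.integral_sum) auto
  also have "\<dots> \<le> (\<Sum>T\<in>Pow I. 2 * expectation (\<lambda>\<omega>. \<bar>\<Sum>i\<in>I. Y i \<omega>\<bar>))"
    by (intro sum_mono signed_sum_le[OF ind fin _ int mean]) auto
  also have "\<dots> = K * (2 * expectation (\<lambda>\<omega>. \<bar>\<Sum>i\<in>I. Y i \<omega>\<bar>))"
    unfolding K_def using fin by (simp add: card_Pow)
  finally have "K / sqrt 2 * expectation (\<lambda>\<omega>. sqrt (\<Sum>j\<in>I. (Y j \<omega>)\<^sup>2))
      \<le> K * (2 * expectation (\<lambda>\<omega>. \<bar>\<Sum>i\<in>I. Y i \<omega>\<bar>))" .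
  then have "expectation (\<lambda>\<omega>. sqrt (\<Sum>j\<in>I. (Y j \<omega>)\<^sup>2)) / sqrt 2
      \<le> 2 * expectation (\<lambda>\<omega>. \<bar>\<Sum>i\<in>I. Y i \<omega>\<bar>)"
    using Kpos by (simp add: field_simps)
  then show ?thesis by (simp add: field_simps)
qed

end


lemma lnorm_abs: "lnorm s m (\<lambda>i. \<bar>z i\<bar>) = lnorm s m z"
  unfolding lnorm_def by simp

lemma lnorm_sqrt_gen:
  assumes "0 < s" "\<And>i. i < m \<Longrightarrow> g i \<ge> 0"
  shows "lnorm s m (\<lambda>i. sqrt (g i)) = sqrt (lnorm (s / 2) m g)"
proof (cases "s = \<infinity>")
  case True
  then show ?thesis using lnorm_sqrt_inf[of m g] assms by simp
next
  case False
  then show ?thesis using lnorm_sqrt[OF assms(1) False] assms(2) by blast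
qed

lemma ereal_pos_half: "1 \<le> (p::ereal) \<Longrightarrow> 0 < p / 2"
  by (cases p) auto

lemma ereal_pos: "1 \<le> (p::ereal) \<Longrightarrow> 0 < p"
  by (cases p) auto

context prob_space
begin

lemma row_bound:
  fixes X :: "'i \<Rightarrow> 'a \<Rightarrow> real" and b :: "'i \<Rightarrow> real"
  assumes ind: "indep_vars (\<lambda>_. borel) X I" and fin: "finite I"
    and int: "\<And>i. i \<in> I \<Longrightarrow> integrable M (X i)" and mean: "\<And>i. i \<in> I \<Longrightarrow> expectation (X i) = 0"
    and lo: "\<And>i. i \<in> I \<Longrightarrow> c \<le> expectation (\<lambda>\<omega>. \<bar>X i \<omega>\<bar>)"
  shows "c * sqrt (\<Sum>j\<in>I. (b j)\<^sup>2) \<le> 2 * sqrt 2 * expectation (\<lambda>\<omega>. \<bar>\<Sum>j\<in>I. b j * X j \<omega>\<bar>)"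
proof -
  define Y where "Y j \<omega> = b j * X j \<omega>" for j \<omega>
  have indY: "indep_vars (\<lambda>_. borel) Y I"
    unfolding Y_def by (rule indep_vars_compose2[OF ind]) measurable
  have intY: "integrable M (Y j)" if "j \<in> I" for j unfolding Y_def using int[OF that] by simp
  have meanY: "expectation (Y j) = 0" if "j \<in> I" for j unfolding Y_def using mean[OF that] by simp
  have kh: "expectation (\<lambda>\<omega>. sqrt (\<Sum>j\<in>I. (Y j \<omega>)\<^sup>2)) \<le> 2 * sqrt 2 * expectation (\<lambda>\<omega>. \<bar>\<Sum>i\<in>I. Y i \<omega>\<bar>)"
    by (rule khintchine_prob[OF indY fin intY meanY])
  define w where "w = sqrt (\<Sum>j\<in>I. (b j)\<^sup>2)"
  have Enn: "0 \<le> expectation (\<lambda>\<omega>. \<bar>\<Sum>i\<in>I. Y i \<omega>\<bar>)" by simp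
  show ?thesis
  proof (cases "w = 0")
    case True
    then show ?thesis using Enn unfolding w_def Y_def by simp
  next
    case False
    moreover have "w \<ge> 0" unfolding w_def by (simp add: sum_nonneg)
    ultimately have wpos: "w > 0" by simp
    have w2: "w\<^sup>2 = (\<Sum>j\<in>I. (b j)\<^sup>2)" unfolding w_def by (simp add: sum_nonneg)
    define u where "u j = \<bar>b j\<bar> / w" for j
    have u0: "u j \<ge> 0" for j unfolding u_def using wpos by simp
    have usq: "(\<Sum>j\<in>I. (u j)\<^sup>2) = 1"
      unfolding u_def using wpos by (simp add: power_divide sum_divide_distrib[symmetric] w2[symmetric])
    have cs: "(\<Sum>j\<in>I. u j * \<bar>Y j \<omega>\<bar>) \<le> sqrt (\<Sum>j\<in>I. (Y j \<omega>)\<^sup>2)" for \<omega>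
    proof (rule real_le_rsqrt)
      have "(\<Sum>j\<in>I. u j * \<bar>Y j \<omega>\<bar>)\<^sup>2 \<le> (\<Sum>j\<in>I. (u j)\<^sup>2) * (\<Sum>j\<in>I. \<bar>Y j \<omega>\<bar>\<^sup>2)"
        by (rule Cauchy_Schwarz_ineq_sum)
      then show "(\<Sum>j\<in>I. u j * \<bar>Y j \<omega>\<bar>)\<^sup>2 \<le> (\<Sum>j\<in>I. (Y j \<omega>)\<^sup>2)" using usq by simp
    qed
    have iaY: "integrable M (\<lambda>\<omega>. \<bar>Y j \<omega>\<bar>)" if "j \<in> I" for j using intY[OF that] by simp
    have "c * w = (\<Sum>j\<in>I. u j * (\<bar>b j\<bar> * c))"
      unfolding u_def using wpos w2 by (simp add: sum_divide_distrib[symmetric] sum_distrib_left power2_eq_square field_simps)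
    also have "\<dots> \<le> (\<Sum>j\<in>I. u j * expectation (\<lambda>\<omega>. \<bar>Y j \<omega>\<bar>))"
    proof (intro sum_mono mult_left_mono u0)
      fix j assume j: "j \<in> I"
      have "expectation (\<lambda>\<omega>. \<bar>Y j \<omega>\<bar>) = \<bar>b j\<bar> * expectation (\<lambda>\<omega>. \<bar>X j \<omega>\<bar>)"
        unfolding Y_def by (simp add: abs_mult)
      then show "\<bar>b j\<bar> * c \<le> expectation (\<lambda>\<omega>. \<bar>Y j \<omega>\<bar>)" using lo[OF j] by (simp add: mult_left_mono)
    qed
    also have "\<dots> = expectation (\<lambda>\<omega>. \<Sum>j\<in>I. u j * \<bar>Y j \<omega>\<bar>)"
      using iaY by (subst Bochner_Integration.integral_sum) auto
    also have "\<dots> \<le> expectation (\<lambda>\<omega>. sqrt (\<Sum>j\<in>I. (Y j \<omega>)\<^sup>2))"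
    proof (rule integral_mono)
      show "integrable M (\<lambda>\<omega>. \<Sum>j\<in>I. u j * \<bar>Y j \<omega>\<bar>)" using iaY by auto
      show "integrable M (\<lambda>\<omega>. sqrt (\<Sum>j\<in>I. (Y j \<omega>)\<^sup>2))"
      proof (rule Bochner_Integration.integrable_bound)
        show "integrable M (\<lambda>\<omega>. \<Sum>j\<in>I. \<bar>Y j \<omega>\<bar>)" using iaY by auto
        have [measurable]: "Y j \<in> borel_measurable M" if "j \<in> I" for j
          using intY[OF that] by auto
        show "(\<lambda>\<omega>. sqrt (\<Sum>j\<in>I. (Y j \<omega>)\<^sup>2)) \<in> borel_measurable M" by measurable
        show "AE \<omega> in M. norm (sqrt (\<Sum>j\<in>I. (Y j \<omega>)\<^sup>2)) \<le> norm (\<Sum>j\<in>I. \<bar>Y j \<omega>\<bar>)"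
        proof (intro AE_I2)
          fix \<omega>
          have "L2_set (\<lambda>j. \<bar>Y j \<omega>\<bar>) I \<le> (\<Sum>j\<in>I. \<bar>Y j \<omega>\<bar>)"
            by (rule L2_set_le_sum) auto
          then show "norm (sqrt (\<Sum>j\<in>I. (Y j \<omega>)\<^sup>2)) \<le> norm (\<Sum>j\<in>I. \<bar>Y j \<omega>\<bar>)"
            unfolding L2_set_def by (simp add: sum_nonneg)
        qed
      qed
      fix \<omega> show "(\<Sum>j\<in>I. u j * \<bar>Y j \<omega>\<bar>) \<le> sqrt (\<Sum>j\<in>I. (Y j \<omega>)\<^sup>2)" by (rule cs)
    qed
    also have "\<dots> \<le> 2 * sqrt 2 * expectation (\<lambda>\<omega>. \<bar>\<Sum>i\<in>I. Y i \<omega>\<bar>)" by (rule kh)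
    finally show ?thesis unfolding w_def Y_def .
  qed
qed

end


theorem proposition5p1:
  fixes M :: "'a measure"
    and X :: "nat \<Rightarrow> nat \<Rightarrow> 'a \<Rightarrow> real"
    and A :: "nat \<Rightarrow> nat \<Rightarrow> real"
    and m n :: nat and c :: real and p q :: ereal
  assumes "prob_space M"
    and "prob_space.indep_vars M (\<lambda>_. borel) (\<lambda>(i, j). X i j) ({..<m} \<times> {..<n})"
    and "\<And>i j. i < m \<Longrightarrow> j < n \<Longrightarrow> integrable M (X i j)"
    and "\<And>i j. i < m \<Longrightarrow> j < n \<Longrightarrow> prob_space.expectation M (X i j) = 0"
    and "\<And>i j. i < m \<Longrightarrow> j < n \<Longrightarrow> prob_space.expectation M (\<lambda>\<omega>. \<bar>X i j \<omega>\<bar>) \<ge> c"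
    and "0 < c"
    and "1 \<le> p" and "1 \<le> q"
  shows "prob_space.expectation M (\<lambda>\<omega>. opnorm p q m n (\<lambda>i j. A i j * X i j \<omega>))
           \<ge> c / (2 * sqrt 2) * sqrt (opnorm (p / 2) (q / 2) m n (\<lambda>i j. (A i j)\<^sup>2))"
proof -
  interpret P: prob_space M by (rule assms(1))
  note ind = assms(2)
  have pq: "1 \<le> p" "1 \<le> q" by (rule assms(7), rule assms(8))
  have Xmeas: "X i j \<in> borel_measurable M" if "i < m" "j < n" for i j
    using assms(3)[OF that] by auto
  define \<Phi> where "\<Phi> \<omega> = opnorm p q m n (\<lambda>i j. A i j * X i j \<omega>)" for \<omega>
  have \<Phi>meas: "\<Phi> \<in> borel_measurable M"
    unfolding \<Phi>_def
    by (rule opnorm_measurable[OF pq, where F="\<lambda>i j \<omega>. A i j * X i j \<omega>"]) (rule borel_measurable_times[OF borel_measurable_const Xmeas])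
  have \<Phi>int: "integrable M \<Phi>"
  proof (rule Bochner_Integration.integrable_bound)
    show "integrable M (\<lambda>\<omega>. \<Sum>i<m. \<Sum>j<n. \<bar>A i j * X i j \<omega>\<bar>)"
      using assms(3) by (intro Bochner_Integration.integrable_sum integrable_abs integrable_mult_right) auto
    show "\<Phi> \<in> borel_measurable M" by (rule \<Phi>meas)
    show "AE \<omega> in M. norm (\<Phi> \<omega>) \<le> norm (\<Sum>i<m. \<Sum>j<n. \<bar>A i j * X i j \<omega>\<bar>)"
    proof (intro AE_I2)
      fix \<omega>
      have "0 \<le> \<Phi> \<omega>" unfolding \<Phi>_def by (rule opnorm_nonneg[OF pq])
      moreover have "\<Phi> \<omega> \<le> (\<Sum>i<m. \<Sum>j<n. \<bar>A i j * X i j \<omega>\<bar>)" unfolding \<Phi>_def by (rule opnorm_le_l1[OF pq])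
      ultimately show "norm (\<Phi> \<omega>) \<le> norm (\<Sum>i<m. \<Sum>j<n. \<bar>A i j * X i j \<omega>\<bar>)" by simp
    qed
  qed
  have E\<Phi>0: "0 \<le> P.expectation \<Phi>"
    unfolding \<Phi>_def by (intro Bochner_Integration.integral_nonneg opnorm_nonneg[OF pq])
  have key: "c * sqrt (lnorm (q / 2) m (\<lambda>i. \<Sum>j<n. (A i j)\<^sup>2 * z j)) \<le> 2 * sqrt 2 * P.expectation \<Phi>"
    if z: "lnorm (p / 2) n z \<le> 1" "\<forall>j\<ge>n. z j = 0" for z
  proof -
    define x where "x j = (if j < n then sqrt \<bar>z j\<bar> else 0)" for j
    have xs: "\<forall>j\<ge>n. x j = 0" unfolding x_def by simp
    have "lnorm p n x = lnorm p n (\<lambda>j. sqrt \<bar>z j\<bar>)" unfolding x_def by (rule lnorm_cong) simp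
    also have "\<dots> = sqrt (lnorm (p / 2) n (\<lambda>j. \<bar>z j\<bar>))" by (rule lnorm_sqrt_gen[OF ereal_pos[OF pq(1)]]) simp
    also have "\<dots> = sqrt (lnorm (p / 2) n z)" by (simp add: lnorm_abs)
    also have "\<dots> \<le> 1" using z(1) by simp
    finally have xn: "lnorm p n x \<le> 1" .
    define w where "w i = sqrt (\<Sum>j<n. (A i j * x j)\<^sup>2)" for i
    have w0: "w i \<ge> 0" for i unfolding w_def by (simp add: sum_nonneg)
    have "lnorm q m w = sqrt (lnorm (q / 2) m (\<lambda>i. \<Sum>j<n. (A i j * x j)\<^sup>2))"
      unfolding w_def by (rule lnorm_sqrt_gen[OF ereal_pos[OF pq(2)]]) (simp add: sum_nonneg)
    also have "(\<lambda>i. \<Sum>j<n. (A i j * x j)\<^sup>2) = (\<lambda>i. \<Sum>j<n. (A i j)\<^sup>2 * \<bar>z j\<bar>)"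
      unfolding x_def by (intro ext sum.cong refl) (simp add: power_mult_distrib)
    finally have wq: "lnorm q m w = sqrt (lnorm (q / 2) m (\<lambda>i. \<Sum>j<n. (A i j)\<^sup>2 * \<bar>z j\<bar>))" .
    have "lnorm (q / 2) m (\<lambda>i. \<Sum>j<n. (A i j)\<^sup>2 * z j) \<le> lnorm (q / 2) m (\<lambda>i. \<Sum>j<n. (A i j)\<^sup>2 * \<bar>z j\<bar>)"
    proof (rule lnorm_mono[OF ereal_pos_half[OF pq(2)]])
      fix i
      have "\<bar>\<Sum>j<n. (A i j)\<^sup>2 * z j\<bar> \<le> (\<Sum>j<n. \<bar>(A i j)\<^sup>2 * z j\<bar>)" by (rule sum_abs)
      also have "\<dots> = \<bar>\<Sum>j<n. (A i j)\<^sup>2 * \<bar>z j\<bar>\<bar>" by (simp add: abs_mult sum_nonneg)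
      finally show "\<bar>\<Sum>j<n. (A i j)\<^sup>2 * z j\<bar> \<le> \<bar>\<Sum>j<n. (A i j)\<^sup>2 * \<bar>z j\<bar>\<bar>" .
    qed
    then have sq_le: "sqrt (lnorm (q / 2) m (\<lambda>i. \<Sum>j<n. (A i j)\<^sup>2 * z j)) \<le> lnorm q m w"
      unfolding wq by simp
    obtain y where y: "\<forall>i. 0 \<le> y i" "\<forall>u. (\<Sum>i<m. y i * \<bar>u i\<bar>) \<le> lnorm q m u"
        "(\<Sum>i<m. y i * \<bar>w i\<bar>) = lnorm q m w"
      using lnorm_dual[OF pq(2), of m w] by blast
    define v where "v i \<omega> = (\<Sum>j<n. A i j * X i j \<omega> * x j)" for i \<omega>
    have iv: "integrable M (\<lambda>\<omega>. \<bar>v i \<omega>\<bar>)" if "i < m" for i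
      unfolding v_def using assms(3) that
      by (intro integrable_abs Bochner_Integration.integrable_sum integrable_mult_left integrable_mult_right) auto
    have row: "c * w i \<le> 2 * sqrt 2 * P.expectation (\<lambda>\<omega>. \<bar>v i \<omega>\<bar>)" if i: "i < m" for i
    proof -
      define J where "J = {i} \<times> {..<n}"
      have J: "J \<subseteq> {..<m} \<times> {..<n}" "finite J" unfolding J_def using i by auto
      have indJ: "P.indep_vars (\<lambda>_. borel) (\<lambda>(i, j). X i j) J"
        by (rule P.indep_vars_subset[OF ind J(1)])
      have rb: "c * sqrt (\<Sum>k\<in>J. ((\<lambda>(i', j). A i' j * x j) k)\<^sup>2)
          \<le> 2 * sqrt 2 * P.expectation (\<lambda>\<omega>. \<bar>\<Sum>k\<in>J. (\<lambda>(i', j). A i' j * x j) k * (\<lambda>(i, j). X i j) k \<omega>\<bar>)"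
        by (rule P.row_bound[OF indJ J(2)]) (use assms(3,4,5) i in \<open>auto simp: J_def\<close>)
      have Jimg: "J = Pair i ` {..<n}" unfolding J_def by auto
      have s1: "(\<Sum>k\<in>J. ((\<lambda>(i', j). A i' j * x j) k)\<^sup>2) = (\<Sum>j<n. (A i j * x j)\<^sup>2)"
        unfolding Jimg by (simp add: sum.reindex inj_on_def)
      have s2: "(\<Sum>k\<in>J. (\<lambda>(i', j). A i' j * x j) k * (\<lambda>(i, j). X i j) k \<omega>) = v i \<omega>" for \<omega>
        unfolding Jimg v_def by (simp add: sum.reindex inj_on_def mult_ac)
      show ?thesis using rb unfolding s1 s2 w_def .
    qed
    have "c * lnorm q m w = (\<Sum>i<m. y i * (c * w i))"
    proof -
      have "(\<Sum>i<m. y i * \<bar>w i\<bar>) = (\<Sum>i<m. y i * w i)" using w0 by simp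
      then have "lnorm q m w = (\<Sum>i<m. y i * w i)" using y(3) by simp
      then show ?thesis by (simp add: sum_distrib_left mult_ac)
    qed
    also have "\<dots> \<le> (\<Sum>i<m. y i * (2 * sqrt 2 * P.expectation (\<lambda>\<omega>. \<bar>v i \<omega>\<bar>)))"
      using row y(1) by (intro sum_mono mult_left_mono) auto
    also have "\<dots> = 2 * sqrt 2 * P.expectation (\<lambda>\<omega>. \<Sum>i<m. y i * \<bar>v i \<omega>\<bar>)"
      using iv by (subst Bochner_Integration.integral_sum) (auto simp: sum_distrib_left mult_ac)
    also have "\<dots> \<le> 2 * sqrt 2 * P.expectation \<Phi>"
    proof (intro mult_left_mono integral_mono)
      show "integrable M (\<lambda>\<omega>. \<Sum>i<m. y i * \<bar>v i \<omega>\<bar>)" using iv by auto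
      show "integrable M \<Phi>" by (rule \<Phi>int)
      fix \<omega>
      have "(\<Sum>i<m. y i * \<bar>v i \<omega>\<bar>) \<le> lnorm q m (\<lambda>i. v i \<omega>)" using y(2) by simp
      also have "\<dots> \<le> \<Phi> \<omega>"
        unfolding \<Phi>_def v_def by (rule opnorm_ge[OF pq xn xs])
      finally show "(\<Sum>i<m. y i * \<bar>v i \<omega>\<bar>) \<le> \<Phi> \<omega>" .
    qed simp
    finally have "c * lnorm q m w \<le> 2 * sqrt 2 * P.expectation \<Phi>" .
    moreover have "c * sqrt (lnorm (q / 2) m (\<lambda>i. \<Sum>j<n. (A i j)\<^sup>2 * z j)) \<le> c * lnorm q m w"
      using sq_le assms(6) by simp
    ultimately show ?thesis by linarith
  qed
  define R where "R = 2 * sqrt 2 * P.expectation \<Phi> / c"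
  have R0: "R \<ge> 0" unfolding R_def using E\<Phi>0 assms(6) by simp
  have "opnorm (p / 2) (q / 2) m n (\<lambda>i j. (A i j)\<^sup>2) \<le> R\<^sup>2"
    unfolding opnorm_oset
  proof (rule cSup_least[OF oset_ne])
    fix v assume "v \<in> oset (p / 2) (q / 2) m n (\<lambda>i j. (A i j)\<^sup>2)"
    then obtain z where vz: "v = lnorm (q / 2) m (\<lambda>i. \<Sum>j<n. (A i j)\<^sup>2 * z j)"
      "lnorm (p / 2) n z \<le> 1" "\<forall>j\<ge>n. z j = 0"
      unfolding oset_def by auto
    have "c * sqrt v \<le> 2 * sqrt 2 * P.expectation \<Phi>" using key[OF vz(2,3)] vz(1) by simp
    then have "sqrt v \<le> R" unfolding R_def using assms(6) by (simp add: field_simps)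
    moreover have "v \<ge> 0" unfolding vz(1) by (rule lnorm_nonneg)
    ultimately have "(sqrt v)\<^sup>2 \<le> R\<^sup>2" by (intro power_mono) auto
    then show "v \<le> R\<^sup>2" using \<open>v \<ge> 0\<close> by simp
  qed
  then have "sqrt (opnorm (p / 2) (q / 2) m n (\<lambda>i j. (A i j)\<^sup>2)) \<le> R"
  proof -
    assume h: "opnorm (p / 2) (q / 2) m n (\<lambda>i j. (A i j)\<^sup>2) \<le> R\<^sup>2"
    have "sqrt (opnorm (p / 2) (q / 2) m n (\<lambda>i j. (A i j)\<^sup>2)) \<le> sqrt (R\<^sup>2)"
      using h by (rule real_sqrt_le_mono)
    then show ?thesis using R0 by simp
  qed
  then have "c / (2 * sqrt 2) * sqrt (opnorm (p / 2) (q / 2) m n (\<lambda>i j. (A i j)\<^sup>2)) \<le> c / (2 * sqrt 2) * R"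
    using assms(6) by (intro mult_left_mono) auto
  also have "c / (2 * sqrt 2) * R = P.expectation \<Phi>" unfolding R_def using assms(6) by simp
  finally show ?thesis unfolding \<Phi>_def .
qed


end
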